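(* With notation as in the context: (a) If $v,w\in\mathscr{O}_3$ are $J$ cosets, then $dd(v,w)$ equals the number of positions (out of six) at which the strings $\gamma_1(v)$ and $\gamma_1(w)$ disagree. (b) If $v,w$ are $L$ cosets of different colors but with the same label, then $dd(v,w)=2$. (c) If $v,w$ are distinct $L$ cosets of the same color, then $dd(v,w)=2$, unless $\{\gamma_1(v),\gamma_1(w)\}=\{i,\overline i\}$ for some $1\le i\le 6$, in which case $dd(v,w)=4$. (d) If $v,w$ are $L$ cosets of different colors and different labels, then $dd(v,w)=4$, unless $v=-w$, in which case $dd(v,w)=6$. (e) Let $v=v(i,j)$ with $i\in\{0,1\}$ and $2\le j\le 7$ (an unbarred $L$ coset of either color, with label $j-1$), and let $w$ be a $J$ coset. Then $dd(v,w)=2$ if $\gamma_1(w)$ has a plus sign in position $j-1$, and $dd(v,w)=4$ otherwise. (f) Let $v=-v(i,j)$ with $i\in\{0,1\}$ and $2\le j\le7$ (a barred $L$ coset of either color, with label $\overline{j-1}$), and let $w$ be a $J$ coset. Then $dd(v,w)=2$ if $\gamma_1(w)$ has a minus sign in position $j-1$, and $dd(v,w)=4$ otherwise.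
   Context: There are 56 symbols $\pm v(i,j)$, $0\le i<j\le 7$ (they index the right cosets of a subgroup $G\cong W(E_6)$ in a group $H\cong W(E_7)$; only the symbols are needed here). To each associate the integer vector $\pm v(i,j)=\pm\big(4(\vec e_{i+1}+\vec e_{j+1})-\sum_{k=1}^8\vec e_k\big)\in\mathbb{Z}^8$, and define the discrete distance $dd(v,w)=\frac1{16}\sum_{k=1}^8(v_k-w_k)^2$. Blue $L$ cosets: $\mathscr{O}_1=\{v(0,j),-v(1,j):2\le j\le7\}$; red $L$ cosets: $\mathscr{O}_2=\{v(1,j),-v(0,j):2\le j\le7\}$; $J$ cosets: $\mathscr{O}_3=\{\pm v(0,1)\}\cup\{\pm v(i,j):2\le i<j\le7\}$. Labels: $\gamma_1(v(0,j))=\gamma_1(v(1,j))=j-1$ and $\gamma_1(-v(1,j))=\gamma_1(-v(0,j))=\overline{j-1}$ for $2\le j\le7$; $\gamma_1(v(0,1))={+}{+}{+}{+}{+}{+}$, $\gamma_1(-v(0,1))={-}{-}{-}{-}{-}{-}$; for $2\le i<j\le7$, $\gamma_1(v(i,j))$ is the length-6 sign string with plus signs in positions $i-1$ and $j-1$ and minus signs elsewhere, and $\gamma_1(-v(i,j))$ is its negation (all signs reversed). *)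

theory Defs
  imports Complex_Main
begin

text \<open>A symbol Sym s i j stands for +v(i,j) if s = True and for -v(i,j) if s = False,
  with 0 <= i < j <= 7.\<close>
datatype sym = Sym bool nat nat

text \<open>Integer vector in Z^8; coordinate k (0 <= k < 8) is the coefficient of e_(k+1).\<close>
definition vec :: "sym \<Rightarrow> nat \<Rightarrow> int" where
  "vec v k = (case v of Sym s i j \<Rightarrow>
      (if s then 1 else -1) * (4 * (of_bool (k = i) + of_bool (k = j)) - 1))"

definition dd :: "sym \<Rightarrow> sym \<Rightarrow> real" where
  "dd v w = real_of_int (\<Sum>k<8. (vec v k - vec w k)^2) / 16"

fun neg :: "sym \<Rightarrow> sym" where
  "neg (Sym s i j) = Sym (\<not> s) i j"

definition O1 :: "sym set" where
  "O1 = {Sym True 0 j | j. 2 \<le> j \<and> j \<le> 7} \<union> {Sym False 1 j | j. 2 \<le> j \<and> j \<le> 7}"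

definition O2 :: "sym set" where
  "O2 = {Sym True 1 j | j. 2 \<le> j \<and> j \<le> 7} \<union> {Sym False 0 j | j. 2 \<le> j \<and> j \<le> 7}"

definition O3 :: "sym set" where
  "O3 = {Sym s 0 1 | s. True} \<union> {Sym s i j | s i j. 2 \<le> i \<and> i < j \<and> j \<le> 7}"

text \<open>Labels: Lab i is i, BarLab i is i-bar, Str a is a length-6 sign string
  (True = plus), position p (1-based) being a ! (p - 1).\<close>
datatype label = Lab nat | BarLab nat | Str "bool list"

fun gamma1 :: "sym \<Rightarrow> label" where
  "gamma1 (Sym s i j) =
     (if i \<le> 1 \<and> 2 \<le> j then (if s then Lab (j - 1) else BarLab (j - 1))
      else if i = 0 \<and> j = 1 then Str (replicate 6 s)
      else Str (map (\<lambda>k. (k + 1 = i - 1 \<or> k + 1 = j - 1) = s) [0..<6]))"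

definition plus_at :: "label \<Rightarrow> nat \<Rightarrow> bool" where
  "plus_at l p = (case l of Str a \<Rightarrow> a ! (p - 1) | _ \<Rightarrow> False)"

definition minus_at :: "label \<Rightarrow> nat \<Rightarrow> bool" where
  "minus_at l p = (case l of Str a \<Rightarrow> \<not> a ! (p - 1) | _ \<Rightarrow> False)"

definition Lcos :: "sym set" where "Lcos = O1 \<union> O2"

definition diff_color :: "sym \<Rightarrow> sym \<Rightarrow> bool" where
  "diff_color v w = ((v \<in> O1 \<and> w \<in> O2) \<or> (v \<in> O2 \<and> w \<in> O1))"

definition same_color :: "sym \<Rightarrow> sym \<Rightarrow> bool" where
  "same_color v w = ((v \<in> O1 \<and> w \<in> O1) \<or> (v \<in> O2 \<and> w \<in> O2))"

end

theory Submission
  imports Defs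
begin

definition L1 :: "sym list" where
  "L1 = map (Sym True 0) [2..<8] @ map (Sym False 1) [2..<8]"
definition L2 :: "sym list" where
  "L2 = map (Sym True 1) [2..<8] @ map (Sym False 0) [2..<8]"
definition L3 :: "sym list" where
  "L3 = [Sym True 0 1, Sym False 0 1] @
     concat (map (\<lambda>s. concat (map (\<lambda>i. map (Sym s i) [i+1..<8]) [2..<8])) [True, False])"

lemma rng: "(2 \<le> (j::nat) \<and> j \<le> 7) \<longleftrightarrow> j \<in> set [2..<8]" by auto



lemma rng2: "(2 \<le> (j::nat) \<and> j \<le> 7) \<longleftrightarrow> j \<in> {2..<8}" by auto
lemma O1_eq: "O1 = set L1"
  unfolding O1_def L1_def rng2 set_append set_map set_upt Setcompr_eq_image ..

lemma O2_eq: "O2 = set L2"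
  unfolding O2_def L2_def rng2 set_append set_map set_upt Setcompr_eq_image ..
lemma memO3: "Sym s i j \<in> O3 \<longleftrightarrow> (i = 0 \<and> j = 1) \<or> (2 \<le> i \<and> i < j \<and> j \<le> 7)"
  unfolding O3_def by simp
lemma in_concat: "x \<in> set (g i) \<Longrightarrow> i \<in> set xs \<Longrightarrow> x \<in> set (concat (map g xs))"
  by auto
lemma memL3: assumes "2 \<le> i" "i < j" "j \<le> (7::nat)" shows "Sym s i j \<in> set L3"
proof -
  have a1: "i \<in> set [2..<8]" using assms by (simp only: set_upt atLeastLessThan_iff) arith
  have a2: "j \<in> set [i+1..<8]" using assms by (simp only: set_upt atLeastLessThan_iff) arith
  have a3: "s \<in> set [True, False]" by (cases s) simp_all
  have "Sym s i j \<in> set (map (Sym s i) [i+1..<8])" by (simp only: set_map) (rule imageI[OF a2])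
  then have "Sym s i j \<in> set (concat (map (\<lambda>i. map (Sym s i) [i+1..<8]) [2..<8]))"
    by (rule in_concat[OF _ a1])
  then have "Sym s i j \<in> set (concat (map (\<lambda>s. concat (map (\<lambda>i. map (Sym s i) [i+1..<8]) [2..<8])) [True, False]))"
    by (rule in_concat[OF _ a3])
  then show ?thesis unfolding L3_def set_append by (rule UnI2)
qed
lemma O3_sub: "O3 \<subseteq> set L3"
proof
  fix x assume "x \<in> O3"
  then obtain s i j where x: "x = Sym s i j" and c: "(i = 0 \<and> j = 1) \<or> (2 \<le> i \<and> i < j \<and> j \<le> 7)"
    by (cases x) (auto simp: memO3)
  show "x \<in> set L3"
  proof (cases "i = 0 \<and> j = 1")
    case True
    then have "x \<in> set [Sym True 0 1, Sym False 0 1]" unfolding x by (cases s) simp_all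
    then show ?thesis unfolding L3_def set_append by (rule UnI1)
  next
    case False then show ?thesis using c memL3 x by blast
  qed
qed

definition ddi :: "sym \<Rightarrow> sym \<Rightarrow> int" where
  "ddi v w = (\<Sum>k\<leftarrow>[0..<8]. (vec v k - vec w k)^2)"

lemma dd_eq: "dd v w = real_of_int (ddi v w) / 16"
  unfolding dd_def ddi_def
  by (simp add: sum_set_upt_conv_sum_list_nat[symmetric] lessThan_atLeast0)

lemma card6: "card {p. 1 \<le> p \<and> p \<le> (6::nat) \<and> P p} = length (filter P [1..<7])"
proof -
  have "{p. 1 \<le> p \<and> p \<le> (6::nat) \<and> P p} = set (filter P [1..<7])" by auto
  then show ?thesis by (simp add: distinct_card[symmetric])
qed

definition PA :: "sym \<Rightarrow> sym \<Rightarrow> bool" where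
  "PA v w = (case gamma1 v of Str a \<Rightarrow> (case gamma1 w of Str b \<Rightarrow>
     ddi v w = 16 * int (length (filter (\<lambda>p. a!(p-1) \<noteq> b!(p-1)) [1..<7])) | _ \<Rightarrow> False) | _ \<Rightarrow> False)"

lemma PA_imp: "PA v w \<Longrightarrow> \<exists>a b. gamma1 v = Str a \<and> gamma1 w = Str b \<and>
        dd v w = real (card {p. 1 \<le> p \<and> p \<le> 6 \<and> a ! (p - 1) \<noteq> b ! (p - 1)})"
  unfolding PA_def card6 dd_eq
  by (cases "gamma1 v"; cases "gamma1 w") simp_all

lemma chkA: "list_all (\<lambda>v. list_all (PA v) L3) L3"
  by code_simp

lemma partA: "\<forall>v\<in>O3. \<forall>w\<in>O3. \<exists>a b. gamma1 v = Str a \<and> gamma1 w = Str b \<and>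
        dd v w = real (card {p. 1 \<le> p \<and> p \<le> 6 \<and> a ! (p - 1) \<noteq> b ! (p - 1)})"
  using chkA O3_sub PA_imp unfolding list_all_iff by blast


lemma dd_if: "ddi v w = (if c then 16 * a else 16 * b) \<Longrightarrow> dd v w = (if c then of_int a else of_int b)"
  by (simp add: dd_eq)

definition PBD :: "sym \<Rightarrow> sym \<Rightarrow> bool" where
  "PBD v w = ((gamma1 v = gamma1 w \<longrightarrow> ddi v w = 32) \<and>
     (gamma1 v \<noteq> gamma1 w \<longrightarrow> ddi v w = (if v = neg w then 16 * 6 else 16 * 4)))"

lemma chkBD: "list_all (\<lambda>v. list_all (PBD v) L2) L1 \<and> list_all (\<lambda>v. list_all (PBD v) L1) L2"
  by code_simp

lemma diffc: "diff_color v w \<Longrightarrow> PBD v w"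
  using chkBD unfolding diff_color_def O1_eq O2_eq list_all_iff by blast

definition lp :: "label \<Rightarrow> label \<Rightarrow> bool" where
  "lp x y = (\<exists>i\<in>set [1..<7]. (x = Lab i \<and> y = BarLab i) \<or> (x = BarLab i \<and> y = Lab i))"

lemma lp_eq: "(\<exists>i. 1 \<le> i \<and> i \<le> 6 \<and> {x, y} = {Lab i, BarLab i}) \<longleftrightarrow> lp x y"
  unfolding lp_def doubleton_eq_iff set_upt atLeastLessThan_iff by auto

definition PC :: "sym \<Rightarrow> sym \<Rightarrow> bool" where
  "PC v w = (v \<noteq> w \<longrightarrow> ddi v w = (if lp (gamma1 v) (gamma1 w) then 16 * 4 else 16 * 2))"

lemma chkC: "list_all (\<lambda>v. list_all (PC v) L1) L1 \<and> list_all (\<lambda>v. list_all (PC v) L2) L2"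
  by code_simp

lemma samec: "same_color v w \<Longrightarrow> PC v w"
  using chkC unfolding same_color_def O1_eq O2_eq list_all_iff by blast

definition PE :: "nat \<Rightarrow> nat \<Rightarrow> sym \<Rightarrow> bool" where
  "PE i j w = (ddi (Sym True i j) w = (if plus_at (gamma1 w) (j - 1) then 16 * 2 else 16 * 4) \<and>
               ddi (Sym False i j) w = (if minus_at (gamma1 w) (j - 1) then 16 * 2 else 16 * 4))"

lemma chkE: "list_all (\<lambda>i. list_all (\<lambda>j. list_all (PE i j) L3) [2..<8]) [0, 1]"
  by code_simp

lemma PE_all: "i \<in> {0, 1} \<Longrightarrow> 2 \<le> j \<Longrightarrow> j \<le> 7 \<Longrightarrow> w \<in> O3 \<Longrightarrow> PE i j w"
proof -
  assume h: "i \<in> {0, 1}" "2 \<le> j" "j \<le> 7" "w \<in> O3"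
  have "j \<in> set [2..<8]" using h by (simp only: set_upt atLeastLessThan_iff) arith
  moreover have "i \<in> set [0, 1]" using h by simp
  moreover have "w \<in> set L3" using h O3_sub by blast
  ultimately show ?thesis using chkE unfolding list_all_iff by blast
qed

theorem proposition6p3:
  shows
  "(\<forall>v\<in>O3. \<forall>w\<in>O3. \<exists>a b. gamma1 v = Str a \<and> gamma1 w = Str b \<and>
        dd v w = real (card {p. 1 \<le> p \<and> p \<le> 6 \<and> a ! (p - 1) \<noteq> b ! (p - 1)}))
   \<and> (\<forall>v w. diff_color v w \<and> gamma1 v = gamma1 w \<longrightarrow> dd v w = 2)
   \<and> (\<forall>v w. same_color v w \<and> v \<noteq> w \<longrightarrow>
        dd v w = (if \<exists>i. 1 \<le> i \<and> i \<le> 6 \<and> {gamma1 v, gamma1 w} = {Lab i, BarLab i}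
                  then 4 else 2))
   \<and> (\<forall>v w. diff_color v w \<and> gamma1 v \<noteq> gamma1 w \<longrightarrow>
        dd v w = (if v = neg w then 6 else 4))
   \<and> (\<forall>i j w. i \<in> {0, 1} \<and> 2 \<le> j \<and> j \<le> 7 \<and> w \<in> O3 \<longrightarrow>
        dd (Sym True i j) w = (if plus_at (gamma1 w) (j - 1) then 2 else 4))
   \<and> (\<forall>i j w. i \<in> {0, 1} \<and> 2 \<le> j \<and> j \<le> 7 \<and> w \<in> O3 \<longrightarrow>
        dd (Sym False i j) w = (if minus_at (gamma1 w) (j - 1) then 2 else 4))"
proof (intro conjI allI impI)
  show "\<forall>v\<in>O3. \<forall>w\<in>O3. \<exists>a b. gamma1 v = Str a \<and> gamma1 w = Str b \<and>
        dd v w = real (card {p. 1 \<le> p \<and> p \<le> 6 \<and> a ! (p - 1) \<noteq> b ! (p - 1)})"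
    by (rule partA)
next
  fix v w assume h: "diff_color v w \<and> gamma1 v = gamma1 w"
  then show "dd v w = 2" using diffc[of v w] by (simp add: PBD_def dd_eq)
next
  fix v w assume h: "same_color v w \<and> v \<noteq> w"
  then have "PC v w" using samec by blast
  then show "dd v w = (if \<exists>i. 1 \<le> i \<and> i \<le> 6 \<and> {gamma1 v, gamma1 w} = {Lab i, BarLab i}
                  then 4 else 2)" unfolding lp_eq PC_def using h by (simp add: dd_eq)
next
  fix v w assume h: "diff_color v w \<and> gamma1 v \<noteq> gamma1 w"
  then show "dd v w = (if v = neg w then 6 else 4)" using diffc[of v w] by (simp add: PBD_def dd_eq)
next
  fix i j :: nat and w assume h: "i \<in> {0, 1} \<and> 2 \<le> j \<and> j \<le> 7 \<and> w \<in> O3"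
  then have "PE i j w" using PE_all[of i j w] by blast
  then show "dd (Sym True i j) w = (if plus_at (gamma1 w) (j - 1) then 2 else 4)"
    unfolding PE_def by (simp add: dd_eq)
next
  fix i j :: nat and w assume h: "i \<in> {0, 1} \<and> 2 \<le> j \<and> j \<le> 7 \<and> w \<in> O3"
  then have "PE i j w" using PE_all[of i j w] by blast
  then show "dd (Sym False i j) w = (if minus_at (gamma1 w) (j - 1) then 2 else 4)"
    unfolding PE_def by (simp add: dd_eq)
qed

end
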